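(* Let $a\ge 4$ and $b\ge 5$ be integers, let $n=a+b-2$, and consider the 2-connected $(a,b)$-puzzle on $V=\{1,\dots,n\}$, i.e. the cycle set consisting of the two cycles $\alpha=(1\ 2\ \dots\ a)$ and $\beta=(a-1\ a\ a+1\ \dots\ n)$. Then any even permutation of $V$ can be generated in $O(n^2)$ shifts; that is, there is an absolute constant $K$ (independent of $a,b$) such that every even permutation of $V$ is a product of at most $Kn^2$ factors, each of which is one of $\alpha,\alpha^{-1},\beta,\beta^{-1}$.
   Context: Permutations are written in cycle notation. A shift along a cycle $(v_1\ \dots\ v_j)$ corresponds to applying the permutation $(v_1\ \dots\ v_j)$ or its inverse to the tokens placed on the vertices of $V$. *)

theory Defs
  imports "HOL-Combinatorics.Combinatorics"
begin

definition puzzle_alpha :: "nat \<Rightarrow> nat \<Rightarrow> nat \<Rightarrow> nat" where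
  "puzzle_alpha a b = cycle_of_list [1..<a+1]"

definition puzzle_beta :: "nat \<Rightarrow> nat \<Rightarrow> nat \<Rightarrow> nat" where
  "puzzle_beta a b = cycle_of_list [a-1..<a+b-1]"

definition puzzle_shifts :: "nat \<Rightarrow> nat \<Rightarrow> (nat \<Rightarrow> nat) set" where
  "puzzle_shifts a b = {puzzle_alpha a b, inv (puzzle_alpha a b),
                        puzzle_beta a b, inv (puzzle_beta a b)}"

end

theory Submission
  imports Defs
begin

definition gen :: "(nat \<Rightarrow> nat) set \<Rightarrow> nat \<Rightarrow> (nat \<Rightarrow> nat) \<Rightarrow> bool" where
  "gen S k p \<longleftrightarrow> (\<exists>fs. set fs \<subseteq> S \<and> length fs \<le> k \<and> p = foldr (\<circ>) fs id)"

lemma foldr_comp_gen: "foldr (\<circ>) fs g = foldr (\<circ>) fs id \<circ> g"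
  by (induction fs) (auto simp: fun_eq_iff)

lemma gen_single: "f \<in> S \<Longrightarrow> gen S 1 f"
  unfolding gen_def by (rule exI[of _ "[f]"]) simp

lemma gen_mono: "gen S k p \<Longrightarrow> k \<le> m \<Longrightarrow> gen S m p"
  unfolding gen_def using le_trans by blast

lemma gen_comp: "gen S k p \<Longrightarrow> gen S m q \<Longrightarrow> gen S (k+m) (p \<circ> q)"
proof -
  assume "gen S k p" "gen S m q"
  then obtain fs gs where "set fs \<subseteq> S" "length fs \<le> k" "p = foldr (\<circ>) fs id"
      "set gs \<subseteq> S" "length gs \<le> m" "q = foldr (\<circ>) gs id" unfolding gen_def by blast
  moreover have "foldr (\<circ>) (fs @ gs) id = foldr (\<circ>) fs id \<circ> foldr (\<circ>) gs id"
    by (simp add: foldr_comp_gen[of fs "foldr (\<circ>) gs id"])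
  ultimately show ?thesis unfolding gen_def
    by (intro exI[of _ "fs @ gs"]) auto
qed

lemma gen_conj: "gen S k t \<Longrightarrow> g \<in> S \<Longrightarrow> h \<in> S \<Longrightarrow> gen S (k+2) (g \<circ> t \<circ> h)"
proof -
  assume a: "gen S k t" "g \<in> S" "h \<in> S"
  have "gen S (k+1) (t \<circ> h)" by (rule gen_comp[OF a(1) gen_single[OF a(3)]])
  then have "gen S (1 + (k+1)) (g \<circ> (t \<circ> h))" by (rule gen_comp[OF gen_single[OF a(2)]])
  then have "gen S (k+2) (g \<circ> (t \<circ> h))" by (rule gen_mono) simp
  then show ?thesis by (simp only: comp_assoc)
qed

definition cyc3 :: "nat \<Rightarrow> nat \<Rightarrow> nat \<Rightarrow> nat \<Rightarrow> nat" where
  "cyc3 x y z = transpose x y \<circ> transpose y z"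

lemma cyc3_apply: "x \<noteq> y \<Longrightarrow> y \<noteq> z \<Longrightarrow> x \<noteq> z \<Longrightarrow>
   cyc3 x y z i = (if i = x then y else if i = y then z else if i = z then x else i)"
  by (auto simp: cyc3_def transpose_def)

lemma conj_tr:
  assumes "\<And>i. h (g i) = i" "\<And>i. g (h i) = i"
  shows "g \<circ> (transpose x y \<circ> transpose z w) \<circ> h = transpose (g x) (g y) \<circ> transpose (g z) (g w)"
proof -
  have inj: "g u = g v \<longleftrightarrow> u = v" for u v by (metis assms(1))
  have *: "g (transpose x y k) = transpose (g x) (g y) (g k)" for x y k
    by (auto simp: transpose_def inj)
  show ?thesis
  proof
    fix i
    have "g (transpose x y (transpose z w (h i))) = transpose (g x) (g y) (transpose (g z) (g w) (g (h i)))"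
      by (simp add: *)
    then show "(g \<circ> (transpose x y \<circ> transpose z w) \<circ> h) i = (transpose (g x) (g y) \<circ> transpose (g z) (g w)) i"
      by (simp add: assms(2))
  qed
qed

lemma conj_cyc3:
  assumes "\<And>i. h (g i) = i" "\<And>i. g (h i) = i"
  shows "g \<circ> cyc3 x y z \<circ> h = cyc3 (g x) (g y) (g z)"
  unfolding cyc3_def by (rule conj_tr[OF assms])

lemma transpose_step: "(m::nat) < k \<Longrightarrow> transpose m (Suc m) (if Suc m \<le> x \<and> x < k then Suc x else if x = k then Suc m else x) = (if m \<le> x \<and> x < k then Suc x else if x = k then m else x)"
  by (simp add: transpose_def)

lemma cycle_upt:
  "cycle_of_list [m..<Suc (m + Suc d)] x = (if m \<le> x \<and> x < m + Suc d then Suc x else if x = m + Suc d then m else x)"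
proof (induction d arbitrary: m)
  case 0
  have "[m..<Suc (m + Suc 0)] = [m, Suc m]" by (simp add: upt_conv_Cons)
  then show ?case by (auto simp: transpose_def)
next
  case (Suc d)
  have k: "Suc (m + Suc (Suc d)) = Suc (Suc m + Suc d)" by simp
  have L1: "[m..<Suc (Suc m + Suc d)] = m # [Suc m..<Suc (Suc m + Suc d)]" by (rule upt_conv_Cons) simp
  have L2: "[Suc m..<Suc (Suc m + Suc d)] = Suc m # [Suc (Suc m)..<Suc (Suc m + Suc d)]" by (rule upt_conv_Cons) simp
  have e: "cycle_of_list [m..<Suc (m + Suc (Suc d))] = transpose m (Suc m) \<circ> cycle_of_list [Suc m..<Suc (Suc m + Suc d)]"
    unfolding k L1 L2 by (simp only: cycle_of_list.simps)
  have IH: "cycle_of_list [Suc m..<Suc (Suc m + Suc d)] x = (if Suc m \<le> x \<and> x < Suc m + Suc d then Suc x else if x = Suc m + Suc d then Suc m else x)"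
    by (rule Suc.IH)
  have "cycle_of_list [m..<Suc (m + Suc (Suc d))] x = transpose m (Suc m) (cycle_of_list [Suc m..<Suc (Suc m + Suc d)] x)"
    by (simp only: e comp_apply)
  also have "\<dots> = transpose m (Suc m) (if Suc m \<le> x \<and> x < Suc m + Suc d then Suc x else if x = Suc m + Suc d then Suc m else x)"
    by (simp only: IH)
  also have "\<dots> = (if m \<le> x \<and> x < m + Suc (Suc d) then Suc x else if x = m + Suc (Suc d) then m else x)"
    using transpose_step[of m "Suc m + Suc d" x] by simp
  finally show ?case .
qed

lemma cycle_upt': "m < k \<Longrightarrow> cycle_of_list [m..<Suc k] x = (if m \<le> x \<and> x < k then Suc x else if x = k then m else x)"
proof -
  assume "m < k"
  then obtain d where k: "k = m + Suc d" using less_imp_Suc_add by fastforce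
  show ?thesis unfolding k by (rule cycle_upt)
qed


definition ALF :: "nat \<Rightarrow> nat \<Rightarrow> nat" where
  "ALF u x = (if 1 \<le> x \<and> x < u+2 then x+1 else if x = u+2 then 1 else x)"
definition IALF :: "nat \<Rightarrow> nat \<Rightarrow> nat" where
  "IALF u x = (if 1 < x \<and> x \<le> u+2 then x-1 else if x = 1 then u+2 else x)"
definition BET :: "nat \<Rightarrow> nat \<Rightarrow> nat \<Rightarrow> nat" where
  "BET u v x = (if u+1 \<le> x \<and> x < v+1 then x+1 else if x = v+1 then u+1 else x)"
definition IBET :: "nat \<Rightarrow> nat \<Rightarrow> nat \<Rightarrow> nat" where
  "IBET u v x = (if u+1 < x \<and> x \<le> v+1 then x-1 else if x = u+1 then v+1 else x)"
definition SH :: "nat \<Rightarrow> nat \<Rightarrow> (nat \<Rightarrow> nat) set" where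
  "SH u v = {ALF u, IALF u, BET u v, IBET u v}"

lemma SH_mem: "ALF u \<in> SH u v" "IALF u \<in> SH u v" "BET u v \<in> SH u v" "IBET u v \<in> SH u v"
  by (simp_all add: SH_def)

lemma cyc3_permutes: "x \<in> S \<Longrightarrow> y \<in> S \<Longrightarrow> z \<in> S \<Longrightarrow> cyc3 x y z permutes S"
  unfolding cyc3_def by (intro permutes_compose permutes_swap_id)

lemma cyc3_permutation: "permutation (cyc3 x y z)"
  unfolding cyc3_def by (simp add: permutation_compose permutation_swap_id)

lemma cyc3_even: "x \<noteq> y \<Longrightarrow> y \<noteq> z \<Longrightarrow> evenperm (cyc3 x y z)"
  unfolding cyc3_def by (simp add: evenperm_comp permutation_swap_id evenperm_swap)

lemma gen4: "f1 \<in> S \<Longrightarrow> f2 \<in> S \<Longrightarrow> f3 \<in> S \<Longrightarrow> f4 \<in> S \<Longrightarrow> gen S 4 (f1 \<circ> f2 \<circ> f3 \<circ> f4)"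
  using gen_comp[OF gen_comp[OF gen_comp[OF gen_single gen_single] gen_single] gen_single, of f1 S f2 f3 f4]
  by (simp add: numeral_eq_Suc)

lemma G_eq:
  assumes "distinct [q1, q2, 1, 2, w]"
  shows "cyc3 q1 q2 1 \<circ> cyc3 q1 q2 2 \<circ> cyc3 q1 q2 w \<circ> cyc3 q1 q2 1 \<circ> cyc3 q1 q2 2 = cyc3 (1::nat) 2 w"
proof
  fix x
  consider "x = q1" | "x = q2" | "x = 1" | "x = 2" | "x = w" | "x \<notin> {q1, q2, 1, 2, w}" by auto
  then show "(cyc3 q1 q2 1 \<circ> cyc3 q1 q2 2 \<circ> cyc3 q1 q2 w \<circ> cyc3 q1 q2 1 \<circ> cyc3 q1 q2 2) x = cyc3 (1::nat) 2 w x"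
    using assms by cases (simp_all add: cyc3_apply)
qed

lemma Gq_eq:
  assumes "distinct [q1, q2, 1, 2::nat]"
  shows "cyc3 q1 q2 2 \<circ> cyc3 q1 q2 1 \<circ> cyc3 q1 q2 1 = cyc3 (1::nat) 2 q1"
proof
  fix x
  consider "x = q1" | "x = q2" | "x = 1" | "x = 2" | "x \<notin> {q1, q2, 1, 2}" by auto
  then show "(cyc3 q1 q2 2 \<circ> cyc3 q1 q2 1 \<circ> cyc3 q1 q2 1) x = cyc3 (1::nat) 2 q1 x"
    using assms by cases (simp_all add: cyc3_apply)
qed


lemma step_card:
  fixes p c :: "nat \<Rightarrow> nat"
  assumes "finite V'" "x \<in> V'" "p x \<noteq> x" "c (p x) = x" "inj p"
    "\<And>z. z \<notin> {1,2,x,p x} \<Longrightarrow> c z = z" "V' \<inter> {1,2} = {}"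
  shows "card {z \<in> V'. (c \<circ> p) z \<noteq> z} < card {z \<in> V'. p z \<noteq> z}"
proof -
  have "{z \<in> V'. (c \<circ> p) z \<noteq> z} \<subseteq> {z \<in> V'. p z \<noteq> z} - {x}"
  proof
    fix z assume z: "z \<in> {z \<in> V'. (c \<circ> p) z \<noteq> z}"
    show "z \<in> {z \<in> V'. p z \<noteq> z} - {x}"
    proof (cases "p z = z")
      case True
      have "z \<noteq> x" using True assms(3) by auto
      moreover have "z \<noteq> p x"
      proof
        assume "z = p x"
        then have "p (p x) = p x" using True by simp
        then have "p x = x" using assms(5) by (simp add: inj_eq)
        then show False using assms(3) by simp
      qed
      moreover have "z \<notin> {1,2}" using z assms(7) by auto
      ultimately have "c z = z" using assms(6) by auto
      then show ?thesis using z True by simp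
    next
      case False
      then show ?thesis using z assms(4) by auto
    qed
  qed
  moreover have "x \<in> {z \<in> V'. p z \<noteq> z}" using assms by simp
  ultimately have "{z \<in> V'. (c \<circ> p) z \<noteq> z} \<subset> {z \<in> V'. p z \<noteq> z}" by blast
  then show ?thesis using assms(1) by (intro psubset_card_mono) auto
qed

context
  fixes u v :: nat
  assumes u2: "2 \<le> u" and v4: "u + 4 \<le> v"
begin

lemma ALF_inv: "IALF u (ALF u x) = x" "ALF u (IALF u x) = x"
  using u2 by (auto simp: ALF_def IALF_def)
lemma BET_inv: "IBET u v (BET u v x) = x" "BET u v (IBET u v x) = x"
  using u2 v4 by (auto simp: BET_def IBET_def)

lemma regions:
  obtains "x = 0" | "x = 1" | "2 \<le> x" "x < u" | "x = u" | "x = u+1" | "x = u+2" | "u+2 < x" "x < v"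
   | "x = v" | "x = v+1" | "v+1 < x"
  by linarith

lemma C1: "IBET u v \<circ> IALF u \<circ> BET u v \<circ> ALF u = transpose (u+2) (u+1) \<circ> transpose u (v+1)"
proof
  fix x show "(IBET u v \<circ> IALF u \<circ> BET u v \<circ> ALF u) x = (transpose (u+2) (u+1) \<circ> transpose u (v+1)) x"
    using u2 v4 by (cases x rule: regions) (auto simp: ALF_def IALF_def BET_def IBET_def transpose_def)
qed

lemma C2: "IBET u v \<circ> ALF u \<circ> BET u v \<circ> IALF u = transpose 1 (u+2) \<circ> transpose (u+1) (v+1)"
proof
  fix x show "(IBET u v \<circ> ALF u \<circ> BET u v \<circ> IALF u) x = (transpose 1 (u+2) \<circ> transpose (u+1) (v+1)) x"
    using u2 v4 by (cases x rule: regions) (auto simp: ALF_def IALF_def BET_def IBET_def transpose_def)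
qed

lemma gC1: "gen (SH u v) 4 (transpose (u+2) (u+1) \<circ> transpose u (v+1))"
  unfolding C1[symmetric] by (intro gen4 SH_mem)

lemma gC2: "gen (SH u v) 4 (transpose 1 (u+2) \<circ> transpose (u+1) (v+1))"
  unfolding C2[symmetric] by (intro gen4 SH_mem)

lemma D1: "gen (SH u v) 6 (transpose (u+1) (v+1) \<circ> transpose u v)"
proof -
  have "gen (SH u v) (4+2) (IBET u v \<circ> (transpose (u+2) (u+1) \<circ> transpose u (v+1)) \<circ> BET u v)"
    by (rule gen_conj[OF gC1 SH_mem(4) SH_mem(3)])
  also have "IBET u v \<circ> (transpose (u+2) (u+1) \<circ> transpose u (v+1)) \<circ> BET u v
     = transpose (IBET u v (u+2)) (IBET u v (u+1)) \<circ> transpose (IBET u v u) (IBET u v (v+1))"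
    by (rule conj_tr) (simp_all add: BET_inv)
  also have "\<dots> = transpose (u+1) (v+1) \<circ> transpose u v"
    using u2 v4 by (simp add: IBET_def)
  finally show ?thesis by (rule gen_mono) simp
qed

lemma E1: "gen (SH u v) 6 (transpose 1 (u+1) \<circ> transpose (v+1) v)"
proof -
  have "gen (SH u v) (4+2) (IBET u v \<circ> (transpose 1 (u+2) \<circ> transpose (u+1) (v+1)) \<circ> BET u v)"
    by (rule gen_conj[OF gC2 SH_mem(4) SH_mem(3)])
  also have "IBET u v \<circ> (transpose 1 (u+2) \<circ> transpose (u+1) (v+1)) \<circ> BET u v
     = transpose (IBET u v 1) (IBET u v (u+2)) \<circ> transpose (IBET u v (u+1)) (IBET u v (v+1))"
    by (rule conj_tr) (simp_all add: BET_inv)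
  also have "\<dots> = transpose 1 (u+1) \<circ> transpose (v+1) v"
    using u2 v4 by (simp add: IBET_def)
  finally show ?thesis by (rule gen_mono) simp
qed

lemma E2: "gen (SH u v) 8 (transpose (u+2) u \<circ> transpose (v+1) v)"
proof -
  have "gen (SH u v) (6+2) (IALF u \<circ> (transpose 1 (u+1) \<circ> transpose (v+1) v) \<circ> ALF u)"
    by (rule gen_conj[OF E1 SH_mem(2) SH_mem(1)])
  also have "IALF u \<circ> (transpose 1 (u+1) \<circ> transpose (v+1) v) \<circ> ALF u
     = transpose (IALF u 1) (IALF u (u+1)) \<circ> transpose (IALF u (v+1)) (IALF u v)"
    by (rule conj_tr) (simp_all add: ALF_inv)
  also have "\<dots> = transpose (u+2) u \<circ> transpose (v+1) v"
    using u2 v4 by (simp add: IALF_def)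
  finally show ?thesis by (rule gen_mono) simp
qed

lemma D2: "gen (SH u v) 10 (transpose (u+3) u \<circ> transpose (u+1) (v+1))"
proof -
  have "gen (SH u v) (8+2) (BET u v \<circ> (transpose (u+2) u \<circ> transpose (v+1) v) \<circ> IBET u v)"
    by (rule gen_conj[OF E2 SH_mem(3) SH_mem(4)])
  also have "BET u v \<circ> (transpose (u+2) u \<circ> transpose (v+1) v) \<circ> IBET u v
     = transpose (BET u v (u+2)) (BET u v u) \<circ> transpose (BET u v (v+1)) (BET u v v)"
    by (rule conj_tr) (simp_all add: BET_inv)
  also have "\<dots> = transpose (u+3) u \<circ> transpose (u+1) (v+1)"
    using u2 v4 by (auto simp: BET_def fun_eq_iff transpose_def)
  finally show ?thesis by (rule gen_mono) simp
qed

lemma base: "gen (SH u v) 16 (cyc3 (u+3) v u)"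
proof -
  have "gen (SH u v) (6+10) ((transpose (u+1) (v+1) \<circ> transpose u v) \<circ> (transpose (u+3) u \<circ> transpose (u+1) (v+1)))"
    by (rule gen_comp[OF D1 D2])
  also have "(transpose (u+1) (v+1) \<circ> transpose u v) \<circ> (transpose (u+3) u \<circ> transpose (u+1) (v+1)) = cyc3 (u+3) v u"
    using u2 v4 by (auto simp: fun_eq_iff cyc3_apply transpose_def)
  finally show ?thesis by (rule gen_mono) simp
qed


lemma X_step:
  assumes "gen (SH u v) k (cyc3 (u+3) v w)"
  shows "gen (SH u v) (k+2) (cyc3 (u+3) v (ALF u w))"
proof -
  have "gen (SH u v) (k+2) (ALF u \<circ> cyc3 (u+3) v w \<circ> IALF u)"
    by (rule gen_conj[OF assms SH_mem(1) SH_mem(2)])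
  also have "ALF u \<circ> cyc3 (u+3) v w \<circ> IALF u = cyc3 (ALF u (u+3)) (ALF u v) (ALF u w)"
    by (rule conj_cyc3) (simp_all add: ALF_inv)
  also have "ALF u (u+3) = u+3" by (simp add: ALF_def)
  also have "ALF u v = v" using v4 by (simp add: ALF_def)
  finally show ?thesis .
qed

lemma X_all:
  assumes "1 \<le> w" "w \<le> u+2"
  shows "gen (SH u v) (26 + 2*u) (cyc3 (u+3) v w)"
proof -
  have P1: "d \<le> 2 \<Longrightarrow> gen (SH u v) (16 + 2*d) (cyc3 (u+3) v (u+d))" for d
  proof (induction d)
    case 0 then show ?case using base by simp
  next
    case (Suc d)
    then have "gen (SH u v) (16 + 2*d + 2) (cyc3 (u+3) v (ALF u (u+d)))"
      by (intro X_step) simp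
    moreover have "ALF u (u+d) = u + Suc d" using Suc.prems u2 by (simp add: ALF_def)
    ultimately show ?case by simp
  qed
  have one: "gen (SH u v) 22 (cyc3 (u+3) v 1)"
  proof -
    have "gen (SH u v) (16 + 2*2 + 2) (cyc3 (u+3) v (ALF u (u+2)))"
      by (rule X_step) (rule P1, simp)
    moreover have "ALF u (u+2) = 1" by (simp add: ALF_def)
    ultimately show ?thesis by simp
  qed
  have P2: "1 + d \<le> u + 2 \<Longrightarrow> gen (SH u v) (22 + 2*d) (cyc3 (u+3) v (1+d))" for d
  proof (induction d)
    case 0 then show ?case using one by simp
  next
    case (Suc d)
    then have "gen (SH u v) (22 + 2*d + 2) (cyc3 (u+3) v (ALF u (1+d)))"
      by (intro X_step) simp
    moreover have "ALF u (1+d) = 1 + Suc d" using Suc.prems by (simp add: ALF_def)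
    ultimately show ?case by simp
  qed
  have "gen (SH u v) (22 + 2*(w-1)) (cyc3 (u+3) v (1+(w-1)))"
    by (rule P2) (use assms in simp)
  then have "gen (SH u v) (22 + 2*(w-1)) (cyc3 (u+3) v w)" using assms by simp
  then show ?thesis by (rule gen_mono) (use assms in simp)
qed

lemma G_all:
  assumes "3 \<le> w" "w \<le> u+2"
  shows "gen (SH u v) (5*(26 + 2*u)) (cyc3 1 2 w)"
proof -
  let ?X = "\<lambda>i. cyc3 (u+3) v i"
  let ?E = "26 + 2*u"
  have "gen (SH u v) (?E + ?E + ?E + ?E + ?E) (?X 1 \<circ> ?X 2 \<circ> ?X w \<circ> ?X 1 \<circ> ?X 2)"
    using assms u2
    by (intro gen_comp X_all) simp_all
  also have "?X 1 \<circ> ?X 2 \<circ> ?X w \<circ> ?X 1 \<circ> ?X 2 = cyc3 1 2 w"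
    using assms u2 v4 by (intro G_eq) auto
  finally show ?thesis by (rule gen_mono) simp
qed

lemma G_q1: "gen (SH u v) (3*(26 + 2*u)) (cyc3 1 2 (u+3))"
proof -
  let ?X = "\<lambda>i. cyc3 (u+3) v i"
  let ?E = "26 + 2*u"
  have "gen (SH u v) (?E + ?E + ?E) (?X 2 \<circ> ?X 1 \<circ> ?X 1)"
    using u2 by (intro gen_comp X_all) simp_all
  also have "?X 2 \<circ> ?X 1 \<circ> ?X 1 = cyc3 1 2 (u+3)"
    using u2 v4 by (intro Gq_eq) auto
  finally show ?thesis by (rule gen_mono) simp
qed

lemma F1: "u + 3 + d \<le> v + 1 \<Longrightarrow> gen (SH u v) (3*(26 + 2*u) + 2*d) (cyc3 1 2 (u+3+d))"
proof (induction d)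
  case 0 then show ?case using G_q1 by simp
next
  case (Suc d)
  then have "gen (SH u v) (3*(26 + 2*u) + 2*d + 2) (BET u v \<circ> cyc3 1 2 (u+3+d) \<circ> IBET u v)"
    by (intro gen_conj SH_mem) simp
  also have "BET u v \<circ> cyc3 1 2 (u+3+d) \<circ> IBET u v = cyc3 (BET u v 1) (BET u v 2) (BET u v (u+3+d))"
    by (rule conj_cyc3) (simp_all add: BET_inv)
  also have "BET u v 1 = 1" using u2 v4 by (simp add: BET_def)
  also have "BET u v 2 = 2" using u2 v4 by (simp add: BET_def)
  also have "BET u v (u+3+d) = u+3+Suc d" using Suc.prems by (simp add: BET_def)
  finally show ?case by (rule gen_mono) simp
qed

lemma T_all:
  assumes "3 \<le> w" "w \<le> v+1"
  shows "gen (SH u v) (30*(v+1)) (cyc3 1 2 w)"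
proof (cases "w \<le> u+2")
  case True
  have "30*(u+4) \<le> 30*v" using v4 by (rule mult_le_mono2)
  then have "5*(26 + 2*u) \<le> 30*(v+1)" by simp
  then show ?thesis by (rule gen_mono[OF G_all[OF assms(1) True]])
next
  case False
  then have "gen (SH u v) (3*(26 + 2*u) + 2*(w-(u+3))) (cyc3 1 2 (u+3+(w-(u+3))))"
    using assms by (intro F1) simp
  moreover have "u+3+(w-(u+3)) = w" using False by simp
  ultimately have "gen (SH u v) (3*(26 + 2*u) + 2*(w-(u+3))) (cyc3 1 2 w)" by simp
  moreover have "3*(26 + 2*u) + 2*(w-(u+3)) \<le> 30*(v+1)"
  proof -
    have "2*(w-(u+3)) \<le> 2*v" using assms by simp
    moreover have "6*u \<le> 6*v" using v4 by simp
    moreover have "6 \<le> v" using v4 u2 by simp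
    ultimately show ?thesis by simp
  qed
  ultimately show ?thesis by (rule gen_mono)
qed


lemma main_ind:
  "\<forall>p. p permutes {1..v+1} \<longrightarrow> evenperm p \<longrightarrow> card {z \<in> {3..v+1}. p z \<noteq> z} \<le> m \<longrightarrow>
     gen (SH u v) (90*(v+1)*m) p"
proof (induction m)
  case 0
  show ?case
  proof (intro allI impI)
    fix p :: "nat \<Rightarrow> nat"
    assume p: "p permutes {1..v+1}" "evenperm p" "card {z \<in> {3..v+1}. p z \<noteq> z} \<le> 0"
    then have fx: "\<And>z. z \<in> {3..v+1} \<Longrightarrow> p z = z" by auto
    have "p permutes {1,2}"
      by (rule permutes_superset[OF p(1)]) (use fx in auto)
    then have "p = id \<or> p = transpose 1 2" by (simp add: permutes_doubleton_iff)
    then have "p = id" using p(2) by (auto simp: evenperm_swap)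
    then show "gen (SH u v) (90*(v+1)*0) p" unfolding gen_def by (intro exI[of _ "[]"]) simp
  qed
next
  case (Suc m)
  show ?case
  proof (intro allI impI)
    fix p :: "nat \<Rightarrow> nat"
    assume p: "p permutes {1..v+1}" "evenperm p"
      and cardle: "card {z \<in> {3..v+1}. p z \<noteq> z} \<le> Suc m"
    have permp: "permutation p" using p(1) by (auto simp: permutation_permutes)
    show "gen (SH u v) (90*(v+1)*Suc m) p"
    proof (cases "{z \<in> {3..v+1}. p z \<noteq> z} = {}")
      case True
      have "card {z \<in> {3..v+1}. p z \<noteq> z} \<le> m" by (simp only: True card.empty le0)
      then have "gen (SH u v) (90*(v+1)*m) p" using Suc.IH p by blast
      then show ?thesis by (rule gen_mono) simp
    next
      case False
      then obtain x where x: "x \<in> {3..v+1}" "p x \<noteq> x" by auto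
      define y where "y = p x"
      have yV: "y \<in> {1..v+1}" unfolding y_def using x(1) permutes_in_image[OF p(1)] by auto
      have yx: "y \<noteq> x" using x(2) y_def by simp
      let ?T = "\<lambda>w. cyc3 1 2 w"
      have Tp: "\<And>w. w \<in> {3..v+1} \<Longrightarrow> ?T w permutes {1..v+1}"
        by (rule cyc3_permutes) auto
      have Te: "\<And>w. w \<in> {3..v+1} \<Longrightarrow> evenperm (?T w)"
        by (rule cyc3_even) auto
      have Tg: "\<And>w. w \<in> {3..v+1} \<Longrightarrow> gen (SH u v) (30*(v+1)) (?T w)"
        using T_all by auto
      have Tperm: "\<And>w. permutation (?T w)" by (rule cyc3_permutation)
      have Tapp: "\<And>w z. w \<in> {3..v+1} \<Longrightarrow> ?T w z = (if z = 1 then 2 else if z = 2 then w else if z = w then 1 else z)"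
        by (rule cyc3_apply) auto
      obtain c c' where cc: "c permutes {1..v+1}" "permutation c" "evenperm c" "c y = x"
          "\<And>z. z \<notin> {1,2,x,y} \<Longrightarrow> c z = z" "c' \<circ> c = id" "gen (SH u v) (90*(v+1)) c'"
      proof -
        consider "y = 1" | "y = 2" | "y \<in> {3..v+1}" using yV by fastforce
        then show thesis
        proof cases
          case 1
          show thesis
          proof (rule that[of "?T x \<circ> ?T x" "?T x"])
            show "?T x \<circ> ?T x permutes {1..v+1}" using Tp[OF x(1)] Tp[OF x(1)] by (rule permutes_compose)
            show "permutation (?T x \<circ> ?T x)" by (intro permutation_compose Tperm)
            show "evenperm (?T x \<circ> ?T x)" using Te[OF x(1)] by (simp add: evenperm_comp cyc3_permutation)
            show "(?T x \<circ> ?T x) y = x" using 1 x(1) by (simp add: cyc3_apply)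
            show "(?T x \<circ> ?T x) z = z" if "z \<notin> {1,2,x,y}" for z using that x(1) by (simp add: cyc3_apply)
            show "?T x \<circ> (?T x \<circ> ?T x) = id" using x(1) by (auto simp: fun_eq_iff cyc3_apply)
            show "gen (SH u v) (90*(v+1)) (?T x)" using Tg[OF x(1)] by (rule gen_mono) simp
          qed
        next
          case 2
          show thesis
          proof (rule that[of "?T x" "?T x \<circ> ?T x"])
            show "?T x permutes {1..v+1}" using Tp[OF x(1)] .
            show "permutation (?T x)" by (rule Tperm)
            show "evenperm (?T x)" using Te[OF x(1)] .
            show "?T x y = x" using 2 x(1) by (simp add: cyc3_apply)
            show "?T x z = z" if "z \<notin> {1,2,x,y}" for z using that x(1) by (simp add: cyc3_apply)
            show "(?T x \<circ> ?T x) \<circ> ?T x = id" using x(1) by (auto simp: fun_eq_iff cyc3_apply)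
            have "gen (SH u v) (30*(v+1) + 30*(v+1)) (?T x \<circ> ?T x)" by (intro gen_comp Tg x(1))
            then show "gen (SH u v) (90*(v+1)) (?T x \<circ> ?T x)" by (rule gen_mono) simp
          qed
        next
          case 3
          show thesis
          proof (rule that[of "?T x \<circ> ?T y \<circ> ?T y" "?T y \<circ> ?T x \<circ> ?T x"])
            show "?T x \<circ> ?T y \<circ> ?T y permutes {1..v+1}"
              using 3 x(1) by (intro permutes_compose Tp)
            show "permutation (?T x \<circ> ?T y \<circ> ?T y)" by (intro permutation_compose Tperm)
            show "evenperm (?T x \<circ> ?T y \<circ> ?T y)" using Te[OF x(1)] Te[OF 3]
              by (simp add: evenperm_comp cyc3_permutation permutation_compose)
            show "(?T x \<circ> ?T y \<circ> ?T y) y = x" using 3 x(1) yx by (simp add: cyc3_apply)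
            show "(?T x \<circ> ?T y \<circ> ?T y) z = z" if "z \<notin> {1,2,x,y}" for z using that x(1) 3 by (simp add: cyc3_apply)
            show "(?T y \<circ> ?T x \<circ> ?T x) \<circ> (?T x \<circ> ?T y \<circ> ?T y) = id"
              using x(1) 3 yx by (auto simp: fun_eq_iff cyc3_apply)
            have "gen (SH u v) (30*(v+1) + 30*(v+1) + 30*(v+1)) (?T y \<circ> ?T x \<circ> ?T x)"
              using 3 x(1) by (intro gen_comp Tg)
            then show "gen (SH u v) (90*(v+1)) (?T y \<circ> ?T x \<circ> ?T x)" by (rule gen_mono) simp
          qed
        qed
      qed
      have p'perm: "c \<circ> p permutes {1..v+1}" by (rule permutes_compose[OF p(1) cc(1)])
      have p'even: "evenperm (c \<circ> p)" using evenperm_comp[OF cc(2) permp] cc(3) p(2) by simp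
      have "card {z \<in> {3..v+1}. (c \<circ> p) z \<noteq> z} < card {z \<in> {3..v+1}. p z \<noteq> z}"
      proof (rule step_card)
        show "finite {3..v+1}" by simp
        show "x \<in> {3..v+1}" "p x \<noteq> x" using x .
        show "c (p x) = x" using cc(4) y_def by simp
        show "inj p" using p(1) by (rule permutes_inj)
        show "\<And>z. z \<notin> {1, 2, x, p x} \<Longrightarrow> c z = z" using cc(5) y_def by simp
        show "{3..v+1} \<inter> {1,2} = {}" by auto
      qed
      then have "card {z \<in> {3..v+1}. (c \<circ> p) z \<noteq> z} \<le> m" using cardle by simp
      then have "gen (SH u v) (90*(v+1)*m) (c \<circ> p)" using Suc.IH p'perm p'even by blast
      then have "gen (SH u v) (90*(v+1) + 90*(v+1)*m) (c' \<circ> (c \<circ> p))" by (rule gen_comp[OF cc(7)])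
      moreover have "c' \<circ> (c \<circ> p) = p" using cc(6) by (simp add: comp_assoc[symmetric])
      ultimately show ?thesis by simp
    qed
  qed
qed
end

theorem lemma2:
  shows "\<exists>K::nat. \<forall>a b :: nat. a \<ge> 4 \<longrightarrow> b \<ge> 5 \<longrightarrow>
     (\<forall>p. p permutes {1..a+b-2} \<longrightarrow> evenperm p \<longrightarrow>
        (\<exists>fs. set fs \<subseteq> puzzle_shifts a b \<and> length fs \<le> K * (a+b-2)^2 \<and>
              p = foldr (\<circ>) fs id))"
proof (intro exI[of _ 90] allI impI)
  fix a b :: nat and p :: "nat \<Rightarrow> nat"
  assume a4: "4 \<le> a" and b5: "5 \<le> b" and pp: "p permutes {1..a+b-2}" and pe: "evenperm p"
  define u where "u = a - 2"
  define v where "v = a + b - 3"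
  have u2: "2 \<le> u" using a4 unfolding u_def by simp
  have v4: "u + 4 \<le> v" using a4 b5 unfolding u_def v_def by simp
  have n: "a + b - 2 = v + 1" using a4 b5 unfolding v_def by simp
  have al: "puzzle_alpha a b = ALF u"
  proof
    fix x
    have ea: "a + 1 = Suc (u+2)" using a4 unfolding u_def by simp
    have lt: "1 < u + 2" by simp
    show "puzzle_alpha a b x = ALF u x"
      unfolding puzzle_alpha_def ea cycle_upt'[OF lt] by (simp add: ALF_def)
  qed
  have be: "puzzle_beta a b = BET u v"
  proof
    fix x
    have e1: "a - 1 = u + 1" using a4 unfolding u_def by simp
    have e2: "a + b - 1 = Suc (v + 1)" using a4 b5 unfolding v_def by simp
    have lt: "u + 1 < v + 1" using v4 by simp
    show "puzzle_beta a b x = BET u v x"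
      unfolding puzzle_beta_def e1 e2 cycle_upt'[OF lt] by (simp add: BET_def)
  qed
  have ial: "inv (ALF u) = IALF u"
    by (rule inv_equality) (simp_all add: ALF_inv[OF u2 v4])
  have ibe: "inv (BET u v) = IBET u v"
    by (rule inv_equality) (simp_all add: BET_inv[OF u2 v4])
  have sh: "puzzle_shifts a b = SH u v"
    unfolding puzzle_shifts_def SH_def al be ial ibe ..
  have pp': "p permutes {1..v+1}" using pp n by simp
  have "card {z \<in> {3..v+1}. p z \<noteq> z} \<le> card {3..v+1}"
    by (rule card_mono) auto
  then have cle: "card {z \<in> {3..v+1}. p z \<noteq> z} \<le> v + 1" by simp
  have g: "gen (SH u v) (90*(v+1)*card {z \<in> {3..v+1}. p z \<noteq> z}) p"
    using main_ind[OF u2 v4] pp' pe by blast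
  have "90*(v+1)*card {z \<in> {3..v+1}. p z \<noteq> z} \<le> 90*(v+1)*(v+1)"
    using cle by (rule mult_le_mono2)
  also have "\<dots> = 90 * (a+b-2)^2" unfolding n by (simp add: power2_eq_square algebra_simps)
  finally have "gen (SH u v) (90 * (a+b-2)^2) p" by (rule gen_mono[OF g])
  then show "\<exists>fs. set fs \<subseteq> puzzle_shifts a b \<and> length fs \<le> 90 * (a+b-2)^2 \<and> p = foldr (\<circ>) fs id"
    unfolding gen_def sh .
qed

end
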